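(* Let $A$ be a metabelian Lie $U$-algebra over a field $k$ and let $x,y,z\in A$. Then (1) if $xyx=0$ and $xyy=0$, then $xy=0$; (2) if $xy=0$, $xz=0$ and $x\neq0$, then $yz=0$.
   Context: Products are left-normed: $xy=x\circ y$, $xyz=(x\circ y)\circ z$. A Lie algebra is metabelian if $(a\circ b)\circ(c\circ d)=0$ identically; $\mathrm{Fit}(A)$ is the ideal generated by all elements lying in nilpotent ideals of $A$. If $\mathrm{Fit}(A)$ is abelian, choose $\{a_\alpha:\alpha\in\Lambda\}\subseteq A$ whose images form a basis of $A/\mathrm{Fit}(A)$, let $R=k[x_\alpha:\alpha\in\Lambda]$, and make $\mathrm{Fit}(A)$ an $R$-module via $b\cdot x_\alpha=b\circ a_\alpha$ (extended multiplicatively and linearly). $A$ is a $U$-algebra if $\mathrm{Fit}(A)$ is abelian and a torsion-free $R$-module. *)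

theory Defs
  imports Complex_Main "HOL-Library.Multiset"
begin

text \<open>A Lie algebra over the field 'k: the vector space (UNIV :: 'v set) with scalar
  multiplication sc, and a bilinear alternating bracket br satisfying Jacobi.
  br x y is the product written x y (x \<circ> y) in the paper.\<close>

definition lie_algebra :: "('k::field \<Rightarrow> 'v::ab_group_add \<Rightarrow> 'v) \<Rightarrow> ('v \<Rightarrow> 'v \<Rightarrow> 'v) \<Rightarrow> bool" where
  "lie_algebra sc br \<longleftrightarrow> Vector_Spaces.vector_space sc
     \<and> (\<forall>x y z. br (x + y) z = br x z + br y z)
     \<and> (\<forall>x y z. br x (y + z) = br x y + br x z)
     \<and> (\<forall>c x y. br (sc c x) y = sc c (br x y))
     \<and> (\<forall>c x y. br x (sc c y) = sc c (br x y))
     \<and> (\<forall>x. br x x = 0)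
     \<and> (\<forall>x y z. br (br x y) z + br (br y z) x + br (br z x) y = 0)"

definition metabelian :: "('v::zero \<Rightarrow> 'v \<Rightarrow> 'v) \<Rightarrow> bool" where
  "metabelian br \<longleftrightarrow> (\<forall>a b c d. br (br a b) (br c d) = 0)"

definition lie_ideal :: "('k::field \<Rightarrow> 'v::ab_group_add \<Rightarrow> 'v) \<Rightarrow> ('v \<Rightarrow> 'v \<Rightarrow> 'v) \<Rightarrow> 'v set \<Rightarrow> bool" where
  "lie_ideal sc br I \<longleftrightarrow> module.subspace sc I \<and> (\<forall>x\<in>I. \<forall>y. br x y \<in> I)"

text \<open>An ideal I is nilpotent iff for some n all left-normed products
  x y1 ... yn of n+1 elements of I vanish (i.e. I^(n+1) = 0).\<close>
definition nilpotent_ideal :: "('k::field \<Rightarrow> 'v::ab_group_add \<Rightarrow> 'v) \<Rightarrow> ('v \<Rightarrow> 'v \<Rightarrow> 'v) \<Rightarrow> 'v set \<Rightarrow> bool" where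
  "nilpotent_ideal sc br I \<longleftrightarrow> lie_ideal sc br I \<and>
     (\<exists>n. \<forall>x\<in>I. \<forall>ys. set ys \<subseteq> I \<and> length ys = n \<longrightarrow> foldl br x ys = 0)"

definition fitting :: "('k::field \<Rightarrow> 'v::ab_group_add \<Rightarrow> 'v) \<Rightarrow> ('v \<Rightarrow> 'v \<Rightarrow> 'v) \<Rightarrow> 'v set" where
  "fitting sc br = \<Inter>{J. lie_ideal sc br J \<and> \<Union>{I. nilpotent_ideal sc br I} \<subseteq> J}"

text \<open>B is a set of representatives whose images form a basis of A/Fit(A).\<close>
definition quotient_basis :: "('k::field \<Rightarrow> 'v::ab_group_add \<Rightarrow> 'v) \<Rightarrow> 'v set \<Rightarrow> 'v set \<Rightarrow> bool" where
  "quotient_basis sc F B \<longleftrightarrow>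
     (\<forall>S c. finite S \<and> S \<subseteq> B \<and> (\<Sum>b\<in>S. sc (c b) b) \<in> F \<longrightarrow> (\<forall>b\<in>S. c b = 0))
   \<and> (\<forall>v. \<exists>S c f. finite S \<and> S \<subseteq> B \<and> f \<in> F \<and> v = (\<Sum>b\<in>S. sc (c b) b) + f)"

text \<open>Polynomials in R = k[x_b : b \<in> B]: finitely supported coefficient functions on
  monomials, a monomial being a finite multiset of variables from B.
  The action of a monomial on v: v \<cdot> x_b = br v b, applied for each variable.\<close>
definition poly_R :: "'v set \<Rightarrow> ('v multiset \<Rightarrow> 'k::field) \<Rightarrow> bool" where
  "poly_R B p \<longleftrightarrow> finite {m. p m \<noteq> 0} \<and> (\<forall>m. p m \<noteq> 0 \<longrightarrow> set_mset m \<subseteq> B)"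

definition mono_act :: "('v \<Rightarrow> 'v \<Rightarrow> 'v) \<Rightarrow> 'v multiset \<Rightarrow> 'v \<Rightarrow> 'v" where
  "mono_act br m v = fold_mset (\<lambda>b w. br w b) v m"

definition poly_act :: "('k::field \<Rightarrow> 'v::ab_group_add \<Rightarrow> 'v) \<Rightarrow> ('v \<Rightarrow> 'v \<Rightarrow> 'v) \<Rightarrow> ('v multiset \<Rightarrow> 'k) \<Rightarrow> 'v \<Rightarrow> 'v" where
  "poly_act sc br p v = (\<Sum>m\<in>{m. p m \<noteq> 0}. sc (p m) (mono_act br m v))"

definition U_algebra :: "('k::field \<Rightarrow> 'v::ab_group_add \<Rightarrow> 'v) \<Rightarrow> ('v \<Rightarrow> 'v \<Rightarrow> 'v) \<Rightarrow> bool" where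
  "U_algebra sc br \<longleftrightarrow>
     (\<forall>x\<in>fitting sc br. \<forall>y\<in>fitting sc br. br x y = 0)
   \<and> (\<exists>B. quotient_basis sc (fitting sc br) B \<and>
        (\<forall>v\<in>fitting sc br. \<forall>p. poly_R B p \<and> p \<noteq> (\<lambda>_. 0) \<and> v \<noteq> 0 \<longrightarrow> poly_act sc br p v \<noteq> 0))"

end

theory Submission
  imports Defs
begin

lemma la_basic:
  assumes "lie_algebra sc br"
  shows "br v 0 = 0" "br 0 v = 0" "br x y = - br y x" "sc 0 v = 0"
    "br x (a + b) = br x a + br x b" "br (a + b) x = br a x + br b x"
    "br x (sc c a) = sc c (br x a)" "br (sc c a) x = sc c (br a x)"
    "br (br x y) z + br (br y z) x + br (br z x) y = 0"
proof -
  have V: "Vector_Spaces.vector_space sc" using assms by (simp add: lie_algebra_def)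
  interpret V: vector_space sc by (rule V)
  have add1: "\<And>x y z. br x (y + z) = br x y + br x z"
   and add2: "\<And>x y z. br (x + y) z = br x z + br y z"
   and alt: "\<And>x. br x x = 0"
    using assms by (auto simp: lie_algebra_def)
  show "br v 0 = 0" using add1[of v 0 0] by simp
  show "br 0 v = 0" using add2[of 0 0 v] by simp
  have e: "br (x+y) (x+y) = br x x + br y x + (br x y + br y y)" by (simp add: add1 add2)
  have "br y x + br x y = 0" using e alt[of "x+y"] alt[of x] alt[of y] by simp
  then have "br x y + br y x = 0" by (simp add: add.commute)
  then show "br x y = - br y x" by (simp add: eq_neg_iff_add_eq_0)
  show "sc 0 v = 0" by simp
  show "br x (a + b) = br x a + br x b" "br (a + b) x = br a x + br b x" by (rule add1, rule add2)
  show "br x (sc c a) = sc c (br x a)" "br (sc c a) x = sc c (br a x)"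
    "br (br x y) z + br (br y z) x + br (br z x) y = 0"
    using assms by (auto simp: lie_algebra_def)
qed

lemma br_sum:
  assumes "lie_algebra sc br" "finite S"
  shows "br v (\<Sum>b\<in>S. g b) = (\<Sum>b\<in>S. br v (g b))"
  using assms(2) by (induction S rule: finite_induct) (auto simp: la_basic(1,2,4-8)[OF assms(1)])

lemma bracket_in_fitting:
  assumes "lie_algebra sc br" "metabelian br"
  shows "br x y \<in> fitting sc br"
proof -
  have V: "Vector_Spaces.vector_space sc" using assms by (simp add: lie_algebra_def)
  interpret V: vector_space sc by (rule V)
  define D where "D = {br a b | a b. True}"
  define I where "I = V.span D"
  have Z: "I \<subseteq> {u. \<forall>a b. br u (br a b) = 0}"
    unfolding I_def
  proof (rule V.span_minimal)
    show "D \<subseteq> {u. \<forall>a b. br u (br a b) = 0}" using assms(2) by (auto simp: D_def metabelian_def)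
    show "V.subspace {u. \<forall>a b. br u (br a b) = 0}"
      by (auto simp: V.subspace_def la_basic(1,2,4-8)[OF assms(1)])
  qed
  have d2: "D \<subseteq> {v. \<forall>u\<in>I. br u v = 0}" using Z by (auto simp: D_def)
  have s2: "V.subspace {v. \<forall>u\<in>I. br u v = 0}"
    by (auto simp: V.subspace_def la_basic(1,2,4-8)[OF assms(1)])
  have Z2: "I \<subseteq> {v. \<forall>u\<in>I. br u v = 0}"
    using V.span_minimal[OF d2 s2] by (simp only: I_def)
  have "lie_ideal sc br I"
    unfolding lie_ideal_def I_def
    by (auto intro!: V.span_base simp: D_def)
  moreover have "\<forall>x\<in>I. \<forall>ys. set ys \<subseteq> I \<and> length ys = 1 \<longrightarrow> foldl br x ys = 0"
  proof (intro ballI allI impI)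
    fix u ys assume u: "u \<in> I" and ys: "set ys \<subseteq> I \<and> length ys = 1"
    then obtain y where "ys = [y]" by (cases ys) auto
    with ys u Z2 show "foldl br u ys = 0" by auto
  qed
  ultimately have "nilpotent_ideal sc br I" unfolding nilpotent_ideal_def by blast
  moreover have "br x y \<in> I" unfolding I_def by (rule V.span_base) (auto simp: D_def)
  ultimately show ?thesis unfolding fitting_def by blast
qed

lemma key:
  assumes la: "lie_algebra sc br" and mb: "metabelian br" and U: "U_algebra sc br"
    and v: "v \<in> fitting sc br" "v \<noteq> 0" and vx: "br v x = 0"
  shows "x \<in> fitting sc br"
proof -
  have V: "Vector_Spaces.vector_space sc" using la by (simp add: lie_algebra_def)
  interpret V: vector_space sc by (rule V)
  let ?F = "fitting sc br"
  have ab: "\<forall>x\<in>?F. \<forall>y\<in>?F. br x y = 0" using U by (simp add: U_algebra_def)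
  obtain B where qb: "quotient_basis sc ?F B"
    and tf: "\<forall>v\<in>?F. \<forall>p. poly_R B p \<and> p \<noteq> (\<lambda>_. 0) \<and> v \<noteq> 0 \<longrightarrow> poly_act sc br p v \<noteq> 0"
    using U by (auto simp: U_algebra_def)
  obtain S c f where S: "finite S" "S \<subseteq> B" and f: "f \<in> ?F"
    and xe: "x = (\<Sum>b\<in>S. sc (c b) b) + f"
  proof -
    have "\<forall>v. \<exists>S c f. finite S \<and> S \<subseteq> B \<and> f \<in> ?F \<and> v = (\<Sum>b\<in>S. sc (c b) b) + f"
      using qb by (simp add: quotient_basis_def)
    then have "\<exists>S c f. finite S \<and> S \<subseteq> B \<and> f \<in> ?F \<and> x = (\<Sum>b\<in>S. sc (c b) b) + f" by (rule spec)
    then show ?thesis using that by blast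
  qed
  have "br v x = (\<Sum>b\<in>S. sc (c b) (br v b))"
    using xe ab v f by (simp add: la_basic(1,2,4-8)[OF la] br_sum[OF la S(1)])
  with vx have sum0: "(\<Sum>b\<in>S. sc (c b) (br v b)) = 0" by simp
  define p where "p = (\<lambda>m. \<Sum>b\<in>S. if m = {#b#} then c b else 0)"
  have pb: "p {#b#} = c b" if "b \<in> S" for b
  proof -
    have "p {#b#} = (\<Sum>b'\<in>S. if b' = b then c b' else 0)"
      unfolding p_def by (rule sum.cong) auto
    also have "\<dots> = c b" using S(1) that by (simp add: sum.delta')
    finally show ?thesis .
  qed
  have pz: "p m = 0" if "m \<notin> (\<lambda>b. {#b#}) ` S" for m
    unfolding p_def using that by (intro sum.neutral) auto
  have supp: "{m. p m \<noteq> 0} \<subseteq> (\<lambda>b. {#b#}) ` S" using pz by blast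
  have "poly_act sc br p v = (\<Sum>m\<in>(\<lambda>b. {#b#}) ` S. sc (p m) (mono_act br m v))"
    unfolding poly_act_def
    by (rule sum.mono_neutral_left) (use supp S(1) in \<open>auto simp: la_basic(1,2,4-8)[OF la]\<close>)
  also have "\<dots> = (\<Sum>b\<in>S. sc (p {#b#}) (mono_act br {#b#} v))"
    by (subst sum.reindex) (auto simp: inj_on_def)
  also have "\<dots> = (\<Sum>b\<in>S. sc (c b) (br v b))"
    by (rule sum.cong) (auto simp: pb mono_act_def)
  finally have pa: "poly_act sc br p v = 0" using sum0 by simp
  have pR: "poly_R B p"
    unfolding poly_R_def
  proof
    show "finite {m. p m \<noteq> 0}" using supp S(1) finite_subset by blast
    show "\<forall>m. p m \<noteq> 0 \<longrightarrow> set_mset m \<subseteq> B"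
    proof (intro allI impI)
      fix m assume "p m \<noteq> 0"
      then obtain b where "b \<in> S" "m = {#b#}" using supp by blast
      then show "set_mset m \<subseteq> B" using S(2) by auto
    qed
  qed
  have "p = (\<lambda>_. 0)" using tf v pR pa by blast
  then have "\<forall>b\<in>S. c b = 0" using pb by (metis)
  then have "(\<Sum>b\<in>S. sc (c b) b) = 0" by (simp add: la_basic(1,2,4-8)[OF la])
  with xe f show ?thesis by simp
qed

theorem theorem3p2p4:
  fixes sc :: "'k::field \<Rightarrow> 'v::ab_group_add \<Rightarrow> 'v" and br :: "'v \<Rightarrow> 'v \<Rightarrow> 'v"
  assumes "lie_algebra sc br" and "metabelian br" and "U_algebra sc br"
  shows "(\<forall>x y. br (br x y) x = 0 \<and> br (br x y) y = 0 \<longrightarrow> br x y = 0)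
       \<and> (\<forall>x y z. br x y = 0 \<and> br x z = 0 \<and> x \<noteq> 0 \<longrightarrow> br y z = 0)"
proof -
  note la = assms(1) and mb = assms(2) and U = assms(3)
  have ab: "\<forall>x\<in>fitting sc br. \<forall>y\<in>fitting sc br. br x y = 0" using U by (simp add: U_algebra_def)
  have P1: "br x y = 0" if "br (br x y) x = 0" "br (br x y) y = 0" for x y
  proof (rule ccontr)
    assume ne: "br x y \<noteq> 0"
    have w: "br x y \<in> fitting sc br" by (rule bracket_in_fitting[OF la mb])
    have "x \<in> fitting sc br" by (rule key[OF la mb U w ne that(1)])
    moreover have "y \<in> fitting sc br" by (rule key[OF la mb U w ne that(2)])
    ultimately show False using ab ne by blast
  qed
  have P2: "br y z = 0" if "br x y = 0" "br x z = 0" "x \<noteq> 0" for x y z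
  proof (rule ccontr)
    assume ne: "br y z \<noteq> 0"
    have w: "br y z \<in> fitting sc br" by (rule bracket_in_fitting[OF la mb])
    have zx: "br z x = 0" using that(2) la_basic(3)[OF la, of z x] by simp
    have yx: "br y x = 0" using that(1) la_basic(3)[OF la, of y x] by simp
    have "br (br y z) x = 0"
      using la_basic(9)[OF la, of y z x] zx that(1) by (simp add: la_basic(1,2,4-8)[OF la])
    then have xF: "x \<in> fitting sc br" by (rule key[OF la mb U w ne])
    have "y \<in> fitting sc br" by (rule key[OF la mb U xF that(3) that(1)])
    moreover have "z \<in> fitting sc br" by (rule key[OF la mb U xF that(3) that(2)])
    ultimately show False using ab ne by blast
  qed
  show ?thesis using P1 P2 by blast
qed

end
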